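(* Let $n\ge1$, $m\ge2$, let $v$ be a vertex of $Y_{n,m}$ and let $p$ be a pivot of $v$. Then $\operatorname{ps}_p(v)=\sum_{i=1}^{p}iv_i+\sum_{i=p+1}^{m}(m+1-i)v_i$. In particular, if $p$ is an inner pivot, then $\operatorname{ps}_p(v)\le\binom{p+1}{2}+\binom{m-p+1}{2}$.
   Context: The Yoke graph $Y_{n,m}$ has vertices the tuples $v=(v_0,\dots,v_{m+1})$ with $v_0,v_{m+1}\in\mathbb{Z}_n$ (identified with their least non-negative representatives), $v_1,\dots,v_m\in\{0,1\}$, $\sum v_i\equiv0\pmod n$; $u\sim v$ iff $u=\overleftarrow{s}_i(v)$ or $u=\overrightarrow{s}_i(v)$ for some $0\le i\le m$, where $\overleftarrow{s}_i(v)$ replaces $v_i,v_{i+1}$ by $v_i+1,v_{i+1}-1$ and $\overrightarrow{s}_i(v)$ by $v_i-1,v_{i+1}+1$ (buckets mod $n$). A pivot of $v$ is an integer $-1\le p\le m+1$ with $n\mid\sum_{i=0}^{p}v_i$; $-1$ and $m+1$ are outer pivots, others are inner pivots. For a path $P$ from $v$ to the zero vertex $0$: $0\le p\le m$ is a wall if no step of $P$ changes entries $p,p+1$; $-1$ is a wall if no step of $P$ is a left shift $\overleftarrow{s}_0$; $m+1$ is a wall if no step is a right shift $\overrightarrow{s}_m$. For a pivot $p$ of $v$, $\operatorname{ps}_p(v)$ denotes the minimum length of a path from $v$ to $0$ having $p$ as a wall. *)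

theory Defs
  imports Main "HOL-Library.Extended_Nat"
begin

definition yoke_vertex :: "nat \<Rightarrow> nat \<Rightarrow> int list \<Rightarrow> bool" where
  "yoke_vertex n m v \<longleftrightarrow>
     length v = m + 2 \<and>
     0 \<le> v ! 0 \<and> v ! 0 < int n \<and>
     0 \<le> v ! (m+1) \<and> v ! (m+1) < int n \<and>
     (\<forall>i\<in>{1..m}. v ! i \<in> {0, 1}) \<and>
     int n dvd sum_list v"

definition yoke_zero :: "nat \<Rightarrow> int list" where
  "yoke_zero m = replicate (m + 2) 0"

definition add_entry :: "nat \<Rightarrow> nat \<Rightarrow> nat \<Rightarrow> int \<Rightarrow> int list \<Rightarrow> int list" where
  "add_entry n m j d v =
     v[j := (if j = 0 \<or> j = m + 1 then (v ! j + d) mod int n else v ! j + d)]"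

definition shift :: "nat \<Rightarrow> nat \<Rightarrow> nat \<times> bool \<Rightarrow> int list \<Rightarrow> int list" where
  "shift n m s v = (case s of (i, lft) \<Rightarrow>
     if lft then add_entry n m (i+1) (-1) (add_entry n m i 1 v)
     else add_entry n m (i+1) 1 (add_entry n m i (-1) v))"

fun yoke_path :: "nat \<Rightarrow> nat \<Rightarrow> int list \<Rightarrow> (nat \<times> bool) list \<Rightarrow> int list \<Rightarrow> bool" where
  "yoke_path n m v [] w \<longleftrightarrow> v = w"
| "yoke_path n m v (s # ss) w \<longleftrightarrow>
     fst s \<le> m \<and> yoke_vertex n m (shift n m s v) \<and> yoke_path n m (shift n m s v) ss w"

definition is_pivot :: "nat \<Rightarrow> nat \<Rightarrow> int list \<Rightarrow> int \<Rightarrow> bool" where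
  "is_pivot n m v p \<longleftrightarrow> -1 \<le> p \<and> p \<le> int m + 1 \<and>
     int n dvd (\<Sum>i\<in>{0..p}. v ! nat i)"

definition is_wall :: "nat \<Rightarrow> (nat \<times> bool) list \<Rightarrow> int \<Rightarrow> bool" where
  "is_wall m P p \<longleftrightarrow>
     (if p = -1 then (0, True) \<notin> set P
      else if p = int m + 1 then (m, False) \<notin> set P
      else (\<forall>s\<in>set P. fst s \<noteq> nat p))"

definition ps :: "nat \<Rightarrow> nat \<Rightarrow> int \<Rightarrow> int list \<Rightarrow> enat" where
  "ps n m p v = Inf {enat (length P) | P. yoke_path n m v P (yoke_zero m) \<and> is_wall m P p}"

end

theory Submission imports Defs begin

definition W :: "nat \<Rightarrow> int \<Rightarrow> nat \<Rightarrow> int" where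
  "W m p j = (if int j \<le> p then int j else int m + 1 - int j)"

definition phi :: "nat \<Rightarrow> int \<Rightarrow> int list \<Rightarrow> int" where
  "phi m p u = (\<Sum>j\<le>m+1. W m p j * u ! j)"

lemma wsum_upd:
  assumes "k < length u"
  shows "(\<Sum>j\<le>K. c j * (u[k:=x]) ! j) = (\<Sum>j\<le>K. c j * u ! j) + (if k \<le> K then c k * (x - u!k) else (0::int))"
proof -
  have "(\<Sum>j\<le>K. c j * (u[k:=x]) ! j) = (\<Sum>j\<le>K. c j * u ! j + (if k = j then c k * (x - u!k) else 0))"
    by (rule sum.cong) (use assms in \<open>auto simp: nth_list_update algebra_simps\<close>)
  also have "\<dots> = (\<Sum>j\<le>K. c j * u ! j) + (if k \<le> K then c k * (x - u!k) else (0::int))"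
    by (simp add: sum.distrib)
  finally show ?thesis .
qed

lemma shift_True:
  assumes "i \<le> m" "length u = m + 2"
  shows "shift n m (i,True) u = (u[i := (if i = 0 then (u!0+1) mod int n else u!i+1)])
     [i+1 := (if i = m then (u!(m+1) - 1) mod int n else u!(i+1) - 1)]"
  using assms by (auto simp: shift_def add_entry_def nth_list_update)

lemma shift_False:
  assumes "i \<le> m" "length u = m + 2"
  shows "shift n m (i,False) u = (u[i := (if i = 0 then (u!0 - 1) mod int n else u!i - 1)])
     [i+1 := (if i = m then (u!(m+1) + 1) mod int n else u!(i+1) + 1)]"
  using assms by (auto simp: shift_def add_entry_def nth_list_update)

lemma sum_list_wsum: "length (u::int list) = m + 2 \<Longrightarrow> sum_list u = (\<Sum>j\<le>m+1. 1 * u ! j)"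
  by (simp add: sum_list_sum_nth atLeast0LessThan lessThan_Suc_atMost[symmetric])

lemma phi_upd2:
  assumes "length u = m + 2" "i \<le> m"
  shows "phi m p ((u[i:=A])[i+1:=B]) = phi m p u + W m p i * (A - u!i) + W m p (i+1) * (B - u!(i+1))"
proof -
  have "phi m p ((u[i:=A])[i+1:=B]) = phi m p (u[i:=A]) + W m p (i+1) * (B - (u[i:=A])!(i+1))"
    using assms unfolding phi_def by (subst wsum_upd) auto
  also have "phi m p (u[i:=A]) = phi m p u + W m p i * (A - u!i)"
    using assms unfolding phi_def by (subst wsum_upd) auto
  finally show ?thesis by simp
qed

lemma mod_down: assumes "0 \<le> x" "x < int n" shows "(x - 1) mod int n \<ge> x - 1"
proof (cases "x = 0")
  case True
  have "0 < int n" using assms by linarith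
  then have "0 \<le> (x - 1) mod int n" by simp
  then show ?thesis using True by simp
qed (use assms in auto)

lemma step_lower:
  assumes v: "yoke_vertex n m u" and "n \<ge> 1" "m \<ge> 1" "i \<le> m" "-1 \<le> p" "p \<le> int m + 1"
    and w1: "p = -1 \<longrightarrow> (i,d) \<noteq> (0,True)" and w2: "p = int m+1 \<longrightarrow> (i,d) \<noteq> (m,False)"
    and w3: "0 \<le> p \<and> p \<le> int m \<longrightarrow> i \<noteq> nat p"
  shows "phi m p u \<le> phi m p (shift n m (i,d) u) + 1"
proof -
  have len: "length u = m + 2" and b0: "0 \<le> u!0" "u!0 < int n" and b1: "0 \<le> u!(m+1)" "u!(m+1) < int n"
    using v by (auto simp: yoke_vertex_def)
  show ?thesis
  proof (cases d)
    case True
    let ?A = "(if i = 0 then (u!0+1) mod int n else u!i+1)"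
    let ?B = "(if i = m then (u!(m+1) - 1) mod int n else u!(i+1) - 1)"
    have e: "phi m p (shift n m (i,d) u) = phi m p u + W m p i * (?A - u!i) + W m p (i+1) * (?B - u!(i+1))"
      using True shift_True[OF assms(4) len, of n] phi_upd2[OF len assms(4)] by simp
    show ?thesis
    proof (cases "i = m")
      case im: True
      show ?thesis
      proof (cases "p = int m + 1")
        case True
        have "?B - u!(i+1) \<ge> -1" using im mod_down[OF b1] by simp
        hence "(int m + 1) * (?B - u!(i+1)) \<ge> (int m + 1) * (-1)"
          by (intro mult_left_mono) auto
        then show ?thesis using e im True assms by (simp add: W_def algebra_simps)
      next
        case False
        then show ?thesis using e im assms by (auto simp: W_def)
      qed
    next
      case False
      then show ?thesis using e assms True by (cases "p = -1") (auto simp: W_def)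
    qed
  next
    case False
    let ?A = "(if i = 0 then (u!0 - 1) mod int n else u!i - 1)"
    let ?B = "(if i = m then (u!(m+1) + 1) mod int n else u!(i+1) + 1)"
    have e: "phi m p (shift n m (i,d) u) = phi m p u + W m p i * (?A - u!i) + W m p (i+1) * (?B - u!(i+1))"
      using False shift_False[OF assms(4) len, of n] phi_upd2[OF len assms(4)] by simp
    show ?thesis
    proof (cases "i = 0")
      case i0: True
      show ?thesis
      proof (cases "p = -1")
        case True
        have "?A - u!i \<ge> -1" using i0 mod_down[OF b0] by simp
        hence "(int m + 1) * (?A - u!i) \<ge> (int m + 1) * (-1)"
          by (intro mult_left_mono) auto
        then show ?thesis using e i0 True assms by (simp add: W_def algebra_simps)
      next
        case False
        then show ?thesis using e i0 assms by (auto simp: W_def)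
      qed
    next
      case False
      then show ?thesis using e assms \<open>\<not> d\<close> by (cases "p = int m + 1") (auto simp: W_def)
    qed
  qed
qed

lemma phi_zero: "phi m p (yoke_zero m) = 0"
  unfolding phi_def yoke_zero_def by (intro sum.neutral) (auto simp del: replicate.simps)

lemma wall_cons:
  assumes "is_wall m (s # P) p" "-1 \<le> p" "p \<le> int m + 1"
  shows "is_wall m P p" "p = -1 \<longrightarrow> s \<noteq> (0,True)" "p = int m+1 \<longrightarrow> s \<noteq> (m,False)"
    "0 \<le> p \<and> p \<le> int m \<longrightarrow> fst s \<noteq> nat p"
  using assms by (auto simp: is_wall_def split: if_splits)

lemma lower:
  assumes "yoke_path n m u P (yoke_zero m)" "is_wall m P p" "yoke_vertex n m u"
    "n \<ge> 1" "m \<ge> 1" "-1 \<le> p" "p \<le> int m + 1"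
  shows "phi m p u \<le> int (length P)"
  using assms(1-3)
proof (induction P arbitrary: u)
  case Nil
  then show ?case by (simp add: phi_zero)
next
  case (Cons s P)
  obtain i d where s: "s = (i,d)" by (cases s)
  note wc = wall_cons[OF Cons.prems(2) assms(6,7)]
  have "phi m p (shift n m s u) \<le> int (length P)"
    using Cons.IH[of "shift n m s u"] Cons.prems wc(1) by auto
  moreover have "phi m p u \<le> phi m p (shift n m (i,d) u) + 1"
    by (rule step_lower) (use Cons.prems wc s assms in auto)
  ultimately show ?case using s by simp
qed

lemma wsum_upd2:
  assumes "length u = m + 2" "i \<le> m"
  shows "(\<Sum>j\<le>K. c j * ((u[i:=A])[i+1:=B]) ! j) = (\<Sum>j\<le>K. c j * u ! j)
     + (if i \<le> K then c i * (A - u!i) else 0) + (if i + 1 \<le> K then c (i+1) * (B - u!(i+1)) else (0::int))"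
proof -
  have "(\<Sum>j\<le>K. c j * ((u[i:=A])[i+1:=B]) ! j) = (\<Sum>j\<le>K. c j * (u[i:=A]) ! j) + (if i + 1 \<le> K then c (i+1) * (B - (u[i:=A])!(i+1)) else 0)"
    using assms by (subst wsum_upd) auto
  also have "(\<Sum>j\<le>K. c j * (u[i:=A]) ! j) = (\<Sum>j\<le>K. c j * u ! j) + (if i \<le> K then c i * (A - u!i) else 0)"
    using assms by (subst wsum_upd) auto
  finally show ?thesis using assms by simp
qed

definition pv :: "nat \<Rightarrow> nat \<Rightarrow> int \<Rightarrow> int list \<Rightarrow> bool" where
  "pv n m p u \<longleftrightarrow> (0 \<le> p \<and> p \<le> int m \<longrightarrow> int n dvd (\<Sum>j\<le>nat p. 1 * u!j))"

lemma dvd_mod_minus: "(n::int) dvd (x mod n - x)"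
  by (simp add: dvd_eq_mod_eq_0 mod_diff_left_eq)

lemma moveL:
  assumes v: "yoke_vertex n m u" and n1: "n \<ge> 1" and im: "i + 1 \<le> m" and u1: "u!(i+1) = 1"
    and ui: "i = 0 \<or> u!i = 0" and ip: "int (i+1) \<le> p" and pm: "p \<le> int m + 1" and pvu: "pv n m p u"
  shows "yoke_vertex n m (shift n m (i,True) u) \<and> pv n m p (shift n m (i,True) u)
     \<and> phi m p (shift n m (i,True) u) = phi m p u - 1"
proof -
  have len: "length u = m + 2" using v by (simp add: yoke_vertex_def)
  have iim: "i \<le> m" using im by simp
  define A where "A = (if i = 0 then (u!0+1) mod int n else u!i+1)"
  have sh: "shift n m (i,True) u = (u[i:=A])[i+1:=0]"
    using shift_True[OF _ len, of i n] im u1 unfolding A_def by simp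
  have Ad: "int n dvd (A - u!i - 1)"
    using ui dvd_mod_minus[of n "u!0+1"] unfolding A_def by (auto simp: algebra_simps)
  have A0: "i = 0 \<Longrightarrow> 0 \<le> A \<and> A < int n" using n1 unfolding A_def by simp
  have A1: "i \<noteq> 0 \<Longrightarrow> A = 1" using ui unfolding A_def by simp
  have sl: "sum_list (shift n m (i,True) u) = sum_list u + (A - u!i - 1)"
  proof -
    have l2: "length ((u[i:=A])[i+1:=0]) = m + 2" using len by simp
    show ?thesis
      unfolding sh sum_list_wsum[OF len] sum_list_wsum[OF l2] wsum_upd2[OF len iim] using im u1 by simp
  qed
  have "yoke_vertex n m (shift n m (i,True) u)"
    unfolding yoke_vertex_def
  proof (intro conjI)
    show "int n dvd sum_list (shift n m (i, True) u)"
      unfolding sl using v Ad by (simp add: yoke_vertex_def)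
  qed (use v A0 A1 im len in \<open>auto simp: sh yoke_vertex_def nth_list_update\<close>)
  moreover have "pv n m p (shift n m (i,True) u)"
  proof -
    have "(\<Sum>j\<le>nat p. 1 * ((u[i:=A])[i+1:=0])!j) = (\<Sum>j\<le>nat p. 1*u!j) + (A - u!i - 1)"
      unfolding wsum_upd2[OF len iim, where c="\<lambda>_. 1"] using ip u1 by auto
    then show ?thesis using pvu ip Ad unfolding pv_def sh
      by (metis dvd_add)
  qed
  moreover have "phi m p (shift n m (i,True) u) = phi m p u - 1"
    using ip im u1 A1 ui unfolding sh phi_upd2[OF len iim]
    by (cases "i = 0") (auto simp: W_def)
  ultimately show ?thesis by blast
qed

lemma moveR:
  assumes v: "yoke_vertex n m u" and n1: "n \<ge> 1" and i1: "1 \<le> i" and im: "i \<le> m" and u1: "u!i = 1"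
    and ui: "i = m \<or> u!(i+1) = 0" and ip: "p < int i" and pm: "-1 \<le> p" and pvu: "pv n m p u"
  shows "yoke_vertex n m (shift n m (i,False) u) \<and> pv n m p (shift n m (i,False) u)
     \<and> phi m p (shift n m (i,False) u) = phi m p u - 1"
proof -
  have len: "length u = m + 2" using v by (simp add: yoke_vertex_def)
  define B where "B = (if i = m then (u!(m+1) + 1) mod int n else u!(i+1)+1)"
  have sh: "shift n m (i,False) u = (u[i:=0])[i+1:=B]"
    using shift_False[OF im len, of n] i1 u1 unfolding B_def by simp
  have Bd: "int n dvd (B - u!(i+1) - 1)"
    using ui dvd_mod_minus[of n "u!(m+1)+1"] unfolding B_def by (auto simp: algebra_simps)
  have B0: "i = m \<Longrightarrow> 0 \<le> B \<and> B < int n" using n1 unfolding B_def by simp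
  have B1: "i \<noteq> m \<Longrightarrow> B = 1" using ui unfolding B_def by simp
  have sl: "sum_list (shift n m (i,False) u) = sum_list u + (B - u!(i+1) - 1)"
  proof -
    have l2: "length ((u[i:=0])[i+1:=B]) = m + 2" using len by simp
    show ?thesis
      unfolding sh sum_list_wsum[OF len] sum_list_wsum[OF l2] wsum_upd2[OF len im] using im u1 by simp
  qed
  have "yoke_vertex n m (shift n m (i,False) u)"
    unfolding yoke_vertex_def
  proof (intro conjI)
    show "int n dvd sum_list (shift n m (i, False) u)"
      unfolding sl using v Bd by (simp add: yoke_vertex_def)
  qed (use v B0 B1 im i1 len in \<open>auto simp: sh yoke_vertex_def nth_list_update\<close>)
  moreover have "pv n m p (shift n m (i,False) u)"
  proof -
    have "(\<Sum>j\<le>nat p. 1 * ((u[i:=0])[i+1:=B])!j) = (\<Sum>j\<le>nat p. 1*u!j)" if "0 \<le> p"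
      unfolding wsum_upd2[OF len im, where c="\<lambda>_. 1"] using ip that by auto
    then show ?thesis using pvu unfolding pv_def sh by auto
  qed
  moreover have "phi m p (shift n m (i,False) u) = phi m p u - 1"
    using ip im u1 B1 ui i1 unfolding sh phi_upd2[OF len im]
    by (cases "i = m") (auto simp: W_def)
  ultimately show ?thesis by blast
qed

lemma moveB0:
  assumes v: "yoke_vertex n m u" and n1: "n \<ge> 1" and m1: "m \<ge> 1" and u1: "u!1 = 0" and u0: "u!0 > 0"
  shows "yoke_vertex n m (shift n m (0,False) u) \<and> pv n m (-1) (shift n m (0,False) u)
     \<and> phi m (-1) (shift n m (0,False) u) = phi m (-1) u - 1"
proof -
  have len: "length u = m + 2" using v by (simp add: yoke_vertex_def)
  have i0: "(0::nat) \<le> m" by simp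
  have u0n: "u!0 < int n" using v by (simp add: yoke_vertex_def)
  have sh: "shift n m (0,False) u = (u[0:=u!0 - 1])[0+1:=1]"
    using shift_False[OF i0 len, of n] m1 u1 u0 u0n by simp
  have sl: "sum_list (shift n m (0,False) u) = sum_list u"
  proof -
    have l2: "length ((u[0:=u!0 - 1])[0+1:=1]) = m + 2" using len by simp
    show ?thesis
      unfolding sh sum_list_wsum[OF len] sum_list_wsum[OF l2] wsum_upd2[OF len i0] using u1 by simp
  qed
  have "yoke_vertex n m (shift n m (0,False) u)"
    unfolding yoke_vertex_def
  proof (intro conjI)
    show "int n dvd sum_list (shift n m (0, False) u)"
      unfolding sl using v by (simp add: yoke_vertex_def)
  qed (use v m1 len u0 in \<open>auto simp: sh yoke_vertex_def nth_list_update\<close>)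
  moreover have "phi m (-1) (shift n m (0,False) u) = phi m (-1) u - 1"
    using u1 m1 unfolding sh phi_upd2[OF len i0]
    by (auto simp: W_def)
  ultimately show ?thesis by (simp add: pv_def)
qed

lemma moveBm:
  assumes v: "yoke_vertex n m u" and n1: "n \<ge> 1" and m1: "m \<ge> 1" and u1: "u!m = 0" and u0: "u!(m+1) > 0"
  shows "yoke_vertex n m (shift n m (m,True) u) \<and> pv n m (int m+1) (shift n m (m,True) u)
     \<and> phi m (int m+1) (shift n m (m,True) u) = phi m (int m+1) u - 1"
proof -
  have len: "length u = m + 2" using v by (simp add: yoke_vertex_def)
  have i0: "m \<le> m" by simp
  have u0n: "u!(m+1) < int n" using v by (simp add: yoke_vertex_def)
  have sh: "shift n m (m,True) u = (u[m:=1])[m+1:=u!(m+1) - 1]"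
    using shift_True[OF i0 len, of n] m1 u1 u0 u0n by simp
  have sl: "sum_list (shift n m (m,True) u) = sum_list u"
  proof -
    have l2: "length ((u[m:=1])[m+1:=u!(m+1) - 1]) = m + 2" using len by simp
    show ?thesis
      unfolding sh sum_list_wsum[OF len] sum_list_wsum[OF l2] wsum_upd2[OF len i0] using u1 by simp
  qed
  have "yoke_vertex n m (shift n m (m,True) u)"
    unfolding yoke_vertex_def
  proof (intro conjI)
    show "int n dvd sum_list (shift n m (m,True) u)"
      unfolding sl using v by (simp add: yoke_vertex_def)
  qed (use v m1 len u0 in \<open>auto simp: sh yoke_vertex_def nth_list_update\<close>)
  moreover have "phi m (int m+1) (shift n m (m,True) u) = phi m (int m+1) u - 1"
    using u1 m1 unfolding sh phi_upd2[OF len i0]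
    by (auto simp: W_def)
  ultimately show ?thesis by (simp add: pv_def)
qed

lemma sum_split_ends: "(\<Sum>j\<le>(m::nat)+1. f j) = f 0 + f (m+1) + (\<Sum>j\<in>{1..m}. (f j :: int))"
proof -
  have "{..m+1} = insert 0 (insert (m+1) {1..m})" by auto
  then show ?thesis by (simp add: algebra_simps)
qed

lemma vert_nonneg: "yoke_vertex n m u \<Longrightarrow> j \<le> m+1 \<Longrightarrow> 0 \<le> u!j"
proof -
  assume v: "yoke_vertex n m u" and j: "j \<le> m+1"
  show ?thesis
  proof (cases "j = 0 \<or> j = m+1")
    case True then show ?thesis using v by (auto simp: yoke_vertex_def)
  next
    case False
    then have "j \<in> {1..m}" using j by auto
    then have "u!j \<in> {0,1}" using v by (auto simp: yoke_vertex_def)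
    then show ?thesis by auto
  qed
qed

lemma vert_inner: "yoke_vertex n m u \<Longrightarrow> 1 \<le> j \<Longrightarrow> j \<le> m \<Longrightarrow> u!j = 0 \<or> u!j = 1"
  unfolding yoke_vertex_def by auto

lemma small_dvd: "0 \<le> (x::int) \<Longrightarrow> x < n \<Longrightarrow> n dvd x \<Longrightarrow> x = 0"
  using zdvd_imp_le by fastforce

lemma phi_terms_zero:
  assumes v: "yoke_vertex n m u" and "-1 \<le> p" "p \<le> int m + 1" and z: "phi m p u = 0" and j: "j \<le> m+1"
  shows "W m p j * u!j = 0"
proof -
  have "\<forall>j\<in>{..m+1}. W m p j * u!j = 0"
    using z unfolding phi_def
    by (subst sum_nonneg_eq_0_iff[symmetric])
       (use assms vert_nonneg[OF v] in \<open>auto simp: W_def intro!: mult_nonneg_nonneg\<close>)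
  then show ?thesis using j by auto
qed

lemma zero_lemma:
  assumes v: "yoke_vertex n m u" and n1: "n \<ge> 1" and m1: "m \<ge> 1" and b: "-1 \<le> p" "p \<le> int m + 1"
    and pvu: "pv n m p u" and z: "phi m p u = 0"
  shows "u = yoke_zero m"
proof -
  have len: "length u = m + 2" using v by (simp add: yoke_vertex_def)
  have inner: "u!j = 0" if "1 \<le> j" "j \<le> m" for j
  proof -
    have "W m p j > 0" using that b by (auto simp: W_def)
    then show ?thesis using phi_terms_zero[OF v b z, of j] that by simp
  qed
  have sl: "sum_list u = u!0 + u!(m+1)"
    unfolding sum_list_wsum[OF len] sum_split_ends using inner by simp
  have b0: "0 \<le> u!0" "u!0 < int n" and bm: "0 \<le> u!(m+1)" "u!(m+1) < int n" and dv: "int n dvd sum_list u"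
    using v by (auto simp: yoke_vertex_def)
  have "u!0 = 0 \<or> u!(m+1) = 0"
  proof (cases "p = -1")
    case True
    then show ?thesis using phi_terms_zero[OF v b z, of 0] by (simp add: W_def)
  next
    case f1: False
    show ?thesis
    proof (cases "p = int m + 1")
      case True
      then show ?thesis using phi_terms_zero[OF v b z, of "m+1"] by (simp add: W_def)
    next
      case False
      with f1 b have pp: "0 \<le> p" "p \<le> int m" by auto
      have "(\<Sum>j\<le>nat p. 1 * u!j) = u!0"
      proof -
        have "{..nat p} = insert 0 {1..nat p}" by auto
        then have "(\<Sum>j\<le>nat p. 1 * u!j) = u!0 + (\<Sum>j\<in>{1..nat p}. u!j)" by simp
        also have "(\<Sum>j\<in>{1..nat p}. u!j) = 0" using inner pp by (intro sum.neutral) auto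
        finally show ?thesis by simp
      qed
      then have "int n dvd u!0" using pvu pp by (simp add: pv_def)
      then show ?thesis using small_dvd b0 by blast
    qed
  qed
  then have both: "u!0 = 0 \<and> u!(m+1) = 0"
    using dv sl small_dvd b0 bm by auto
  show ?thesis
  proof (rule nth_equalityI)
    show "length u = length (yoke_zero m)" using len by (simp add: yoke_zero_def)
    fix j assume "j < length u"
    then show "u ! j = yoke_zero m ! j"
      using len both inner[of j] by (cases "j = 0"; cases "j = m+1") (auto simp: yoke_zero_def simp del: replicate.simps)
  qed
qed

definition wall_ok :: "nat \<Rightarrow> int \<Rightarrow> nat \<times> bool \<Rightarrow> bool" where
  "wall_ok m p s \<longleftrightarrow> fst s \<le> m \<and> (p = -1 \<longrightarrow> s \<noteq> (0,True)) \<and> (p = int m+1 \<longrightarrow> s \<noteq> (m,False))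
     \<and> (0 \<le> p \<and> p \<le> int m \<longrightarrow> fst s \<noteq> nat p)"

lemma step_exists:
  assumes v: "yoke_vertex n m u" and n1: "n \<ge> 1" and m1: "m \<ge> 1" and b: "-1 \<le> p" "p \<le> int m + 1"
    and pvu: "pv n m p u" and pos: "phi m p u > 0"
  shows "\<exists>s. wall_ok m p s \<and> yoke_vertex n m (shift n m s u) \<and> pv n m p (shift n m s u)
     \<and> phi m p (shift n m s u) = phi m p u - 1"
proof -
  have len: "length u = m + 2" using v by (simp add: yoke_vertex_def)
  show ?thesis
  proof (cases "\<exists>j. 1 \<le> j \<and> j \<le> m \<and> int j \<le> p \<and> u!j = 1")
    case True
    let ?P = "\<lambda>j. 1 \<le> j \<and> j \<le> m \<and> int j \<le> p \<and> u!j = 1"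
    define j0 where "j0 = (LEAST j. ?P j)"
    have Pj0: "?P j0" unfolding j0_def by (rule LeastI_ex[OF True])
    have minj: "\<not> ?P j" if "j < j0" for j using not_less_Least[OF that[unfolded j0_def]] unfolding j0_def .
    define i where "i = j0 - 1"
    have ij: "i + 1 = j0" using Pj0 unfolding i_def by auto
    have ui: "i = 0 \<or> u!i = 0"
    proof (cases "i = 0")
      case False
      then have "\<not> ?P i" using minj ij by auto
      then have "u!i \<noteq> 1" using False Pj0 ij by auto
      then show ?thesis using vert_inner[OF v, of i] False Pj0 ij by auto
    qed simp
    have mv: "yoke_vertex n m (shift n m (i,True) u) \<and> pv n m p (shift n m (i,True) u)
     \<and> phi m p (shift n m (i,True) u) = phi m p u - 1"
      by (rule moveL[OF v n1]) (use Pj0 ij ui b pvu in auto)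
    have ip: "int i < p" "i < m" using Pj0 ij by auto
    have ipn: "i \<noteq> nat p" using ip by linarith
    have wo: "wall_ok m p (i,True)" unfolding wall_ok_def using ip ipn by auto
    show ?thesis by (rule exI[of _ "(i,True)"]) (use mv wo in simp)
  next
    case nL: False
    show ?thesis
    proof (cases "\<exists>j. 1 \<le> j \<and> j \<le> m \<and> p < int j \<and> u!j = 1")
      case True
      let ?P = "\<lambda>j. 1 \<le> j \<and> j \<le> m \<and> p < int j \<and> u!j = 1"
      define i where "i = (GREATEST j. ?P j)"
      have bnd: "\<And>y. ?P y \<Longrightarrow> y \<le> m" by blast
      have Pi: "?P i" unfolding i_def by (rule GreatestI_ex_nat[OF True bnd])
      have maxi: "j \<le> i" if "?P j" for j unfolding i_def by (rule Greatest_le_nat[where P="?P", OF that bnd])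
      have ui: "i = m \<or> u!(i+1) = 0"
      proof (cases "i = m")
        case False
        then have "\<not> ?P (i+1)" using maxi by fastforce
        then have "u!(i+1) \<noteq> 1" using False Pi by auto
        then show ?thesis using vert_inner[OF v, of "i+1"] False Pi by auto
      qed simp
      have mv: "yoke_vertex n m (shift n m (i,False) u) \<and> pv n m p (shift n m (i,False) u)
       \<and> phi m p (shift n m (i,False) u) = phi m p u - 1"
        by (rule moveR[OF v n1]) (use Pi ui b pvu in auto)
      have wo: "wall_ok m p (i,False)" using Pi unfolding wall_ok_def by auto
      show ?thesis by (rule exI[of _ "(i,False)"]) (use mv wo in simp)
    next
      case nR: False
      have inner: "u!j = 0" if "1 \<le> j" "j \<le> m" for j
        using nL nR vert_inner[OF v that] that by (cases "int j \<le> p") auto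
      have ph: "phi m p u = W m p 0 * u!0 + W m p (m+1) * u!(m+1)"
        unfolding phi_def sum_split_ends using inner by simp
      show ?thesis
      proof (cases "p = -1")
        case True
        then have "u!0 > 0" using ph pos vert_nonneg[OF v, of "m+1"] by (auto simp: W_def zero_less_mult_iff)
        then have mv: "yoke_vertex n m (shift n m (0,False) u) \<and> pv n m p (shift n m (0,False) u)
          \<and> phi m p (shift n m (0,False) u) = phi m p u - 1"
          using moveB0[OF v n1 m1 inner[of 1]] m1 True by auto
        have wo: "wall_ok m p (0,False)" using True unfolding wall_ok_def by auto
        show ?thesis by (rule exI[of _ "(0,False)"]) (use mv wo in simp)
      next
        case f1: False
        show ?thesis
        proof (cases "p = int m + 1")
          case True
          then have "u!(m+1) > 0" using ph pos by (auto simp: W_def zero_less_mult_iff)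
          then have mv: "yoke_vertex n m (shift n m (m,True) u) \<and> pv n m p (shift n m (m,True) u)
            \<and> phi m p (shift n m (m,True) u) = phi m p u - 1"
            using moveBm[OF v n1 m1 inner[of m]] m1 True by auto
          have wo: "wall_ok m p (m,True)" using True unfolding wall_ok_def by auto
          show ?thesis by (rule exI[of _ "(m,True)"]) (use mv wo in simp)
        next
          case False
          then have "phi m p u = 0" using ph f1 b by (auto simp: W_def)
          then show ?thesis using pos by simp
        qed
      qed
    qed
  qed
qed


lemma phi_nonneg:
  assumes v: "yoke_vertex n m u" and "-1 \<le> p" "p \<le> int m + 1"
  shows "0 \<le> phi m p u"
  unfolding phi_def
  by (intro sum_nonneg mult_nonneg_nonneg) (use assms vert_nonneg[OF v] in \<open>auto simp: W_def\<close>)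

lemma wall_cons_intro: "-1 \<le> p \<Longrightarrow> wall_ok m p s \<Longrightarrow> is_wall m P p \<Longrightarrow> is_wall m (s # P) p"
  unfolding wall_ok_def is_wall_def by (cases s) (auto split: if_splits)

lemma upper:
  assumes "yoke_vertex n m u" and n1: "n \<ge> 1" and m1: "m \<ge> 1" and b: "-1 \<le> p" "p \<le> int m + 1"
    and "pv n m p u"
  shows "\<exists>P. yoke_path n m u P (yoke_zero m) \<and> is_wall m P p \<and> int (length P) = phi m p u"
proof -
  have "\<And>u. yoke_vertex n m u \<Longrightarrow> pv n m p u \<Longrightarrow> phi m p u = int k \<Longrightarrow>
     \<exists>P. yoke_path n m u P (yoke_zero m) \<and> is_wall m P p \<and> int (length P) = phi m p u" for k
  proof (induction k)
    case 0
    then have "u = yoke_zero m" using zero_lemma[OF _ n1 m1 b] by simp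
    then show ?case by (intro exI[of _ "[]"]) (simp add: is_wall_def phi_zero)
  next
    case (Suc k)
    obtain s where s: "wall_ok m p s" "yoke_vertex n m (shift n m s u)" "pv n m p (shift n m s u)"
      "phi m p (shift n m s u) = phi m p u - 1"
      using step_exists[OF Suc.prems(1) n1 m1 b Suc.prems(2)] Suc.prems(3) by auto
    obtain P where P: "yoke_path n m (shift n m s u) P (yoke_zero m)" "is_wall m P p"
      "int (length P) = phi m p (shift n m s u)"
      using Suc.IH[OF s(2,3)] s(4) Suc.prems(3) by auto
    have "fst s \<le> m" using s(1) by (simp add: wall_ok_def)
    then show ?case
      using P s wall_cons_intro[OF b(1) s(1) P(2)] by (intro exI[of _ "s # P"]) auto
  qed
  then show ?thesis using assms phi_nonneg[OF assms(1) b]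
    by (metis nat_0_le)
qed


lemma int_Icc_image: "0 \<le> (p::int) \<Longrightarrow> {0..p} = int ` {..nat p}"
proof -
  assume "0 \<le> p"
  have "x \<in> int ` {..nat p}" if "x \<in> {0..p}" for x
    using that by (intro image_eqI[of _ _ "nat x"]) auto
  then show ?thesis using \<open>0 \<le> p\<close> by (auto simp: le_nat_iff)
qed

lemma pivot_pv: "is_pivot n m v p \<Longrightarrow> pv n m p v"
  unfolding is_pivot_def pv_def
  by (auto simp: int_Icc_image sum.reindex)

lemma formula_eq:
  assumes b: "-1 \<le> p" "p \<le> int m + 1"
  shows "(\<Sum>i\<in>{1..p}. i * v ! nat i) + (\<Sum>i\<in>{p+1..int m}. (int m + 1 - i) * v ! nat i) = phi m p v"
proof -
  have s1: "{0..int m+1} \<inter> {1..p} = {1..p}" "{0..int m+1} \<inter> {p+1..int m} = {p+1..int m}" using b by auto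
  have "(\<Sum>i\<in>{1..p}. i * v ! nat i) + (\<Sum>i\<in>{p+1..int m}. (int m + 1 - i) * v ! nat i)
     = (\<Sum>i\<in>{0..int m+1}. (if i \<in> {1..p} then i * v ! nat i else 0) + (if i \<in> {p+1..int m} then (int m + 1 - i) * v ! nat i else 0))"
    unfolding sum.distrib sum.inter_restrict[OF finite_atLeastAtMost_int, symmetric] s1 ..
  also have "\<dots> = (\<Sum>j\<in>{..m+1}. (\<lambda>i. (if i \<in> {1..p} then i * v ! nat i else 0) + (if i \<in> {p+1..int m} then (int m + 1 - i) * v ! nat i else 0)) (int j))"
  proof -
    have eqs: "{0..int m+1} = int ` {..m+1}" using int_Icc_image[of "int m + 1"] by (simp add: nat_add_distrib)
    show ?thesis unfolding eqs by (subst sum.reindex) auto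
  qed
  also have "\<dots> = phi m p v"
    unfolding phi_def by (rule sum.cong) (use b in \<open>auto simp: W_def\<close>)
  finally show ?thesis .
qed

lemma ch2: "Suc n choose 2 = (n choose 2) + n"
  by (simp add: numeral_2_eq_2 binomial_Suc_Suc)
lemma gauss2: "(\<Sum>j\<in>{P+1..P+k}. P + k + 1 - j) = (k+1) choose 2"
proof (induction k)
  case 0 then show ?case by simp
next
  case (Suc k)
  have "{P+1..P+Suc k} = insert (P + Suc k) {P+1..P+k}" by auto
  then have "(\<Sum>j\<in>{P+1..P+Suc k}. P + Suc k + 1 - j) = (\<Sum>j\<in>{P+1..P+k}. (P + k + 1 - j) + 1) + 1"
    by (auto intro!: sum.cong)
  also have "\<dots> = (\<Sum>j\<in>{P+1..P+k}. P + k + 1 - j) + k + 1" by (subst sum.distrib) simp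
  also have "\<dots> = ((k+1) choose 2) + k + 1" using Suc by simp
  also have "\<dots> = (Suc k + 1) choose 2" using ch2[of "k+1"] by simp
  finally show ?case .
qed
lemma gauss1: "(\<Sum>j\<in>{1..P}. j) = (P+1) choose 2"
  by (induction P) (auto simp: ch2)

lemma binom_bound:
  assumes v: "yoke_vertex n m v" and p: "0 \<le> p" "p \<le> int m"
  shows "phi m p v \<le> int (((nat p + 1) choose 2) + ((m - nat p + 1) choose 2))"
proof -
  define P where "P = nat p"
  have Pm: "P \<le> m" and pP: "p = int P" using p unfolding P_def by auto
  have "phi m p v = (\<Sum>j\<in>{1..m}. W m p j * v!j)"
    unfolding phi_def sum_split_ends using pP Pm by (simp add: W_def)
  also have "\<dots> \<le> (\<Sum>j\<in>{1..m}. W m p j)"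
  proof (rule sum_mono)
    fix j assume "j \<in> {1..m}"
    then have "W m p j \<ge> 0" "v!j \<le> 1" using vert_inner[OF v, of j] p by (auto simp: W_def)
    then show "W m p j * v!j \<le> W m p j" by (simp add: mult_left_le)
  qed
  also have "\<dots> = (\<Sum>j\<in>{1..P}. W m p j) + (\<Sum>j\<in>{P+1..m}. W m p j)"
  proof -
    have "{1..m} = {1..P} \<union> {P+1..m}" using Pm by auto
    then show ?thesis by (simp add: sum.union_disjoint)
  qed
  also have "(\<Sum>j\<in>{1..P}. W m p j) = int (\<Sum>j\<in>{1..P}. j)"
    unfolding of_nat_sum using pP by (intro sum.cong) (auto simp: W_def)
  also have "(\<Sum>j\<in>{P+1..m}. W m p j) = int (\<Sum>j\<in>{P+1..P+(m-P)}. P + (m-P) + 1 - j)"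
    unfolding of_nat_sum using pP Pm by (intro sum.cong) (auto simp: W_def of_nat_diff)
  finally show ?thesis unfolding gauss1 gauss2 P_def using Pm P_def
    by (simp add: Suc_diff_le)
qed


theorem corollary4p12:
  fixes n m :: nat and v :: "int list" and p :: int
  assumes "n \<ge> 1" and "m \<ge> 2"
    and "yoke_vertex n m v"
    and "is_pivot n m v p"
  shows "ps n m p v = enat (nat ((\<Sum>i\<in>{1..p}. i * v ! nat i)
                                  + (\<Sum>i\<in>{p+1..int m}. (int m + 1 - i) * v ! nat i)))
     \<and> (0 \<le> p \<and> p \<le> int m \<longrightarrow>
          ps n m p v \<le> enat (((nat p + 1) choose 2) + ((m - nat p + 1) choose 2)))"
proof -
  have n1: "n \<ge> 1" and m1: "m \<ge> 1" and v: "yoke_vertex n m v" using assms by auto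
  have b: "-1 \<le> p" "p \<le> int m + 1" using assms(4) by (auto simp: is_pivot_def)
  define S where "S = {enat (length P) | P. yoke_path n m v P (yoke_zero m) \<and> is_wall m P p}"
  have psS: "ps n m p v = Inf S" unfolding S_def ps_def ..
  have lowS: "enat (nat (phi m p v)) \<le> x" if xS: "x \<in> S" for x
  proof -
    obtain P where P: "x = enat (length P)" "yoke_path n m v P (yoke_zero m)" "is_wall m P p"
      using xS unfolding S_def by blast
    have "phi m p v \<le> int (length P)" using lower[OF P(2,3) v n1 m1 b] .
    then show ?thesis using P(1) by simp
  qed
  have memS: "enat (nat (phi m p v)) \<in> S"
  proof -
    obtain P where P: "yoke_path n m v P (yoke_zero m)" "is_wall m P p" "int (length P) = phi m p v"
      using upper[OF v n1 m1 b pivot_pv[OF assms(4)]] by blast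
    have "enat (nat (phi m p v)) = enat (length P)" using P(3) by simp
    then show ?thesis unfolding S_def using P(1,2) by blast
  qed
  have ps_eq: "ps n m p v = enat (nat (phi m p v))"
    unfolding psS by (intro antisym Inf_lower memS Inf_greatest lowS)
  show ?thesis
  proof
    show "ps n m p v = enat (nat ((\<Sum>i\<in>{1..p}. i * v ! nat i)
                                  + (\<Sum>i\<in>{p+1..int m}. (int m + 1 - i) * v ! nat i)))"
      unfolding ps_eq formula_eq[OF b] ..
    show "0 \<le> p \<and> p \<le> int m \<longrightarrow>
          ps n m p v \<le> enat (((nat p + 1) choose 2) + ((m - nat p + 1) choose 2))"
    proof
      assume pp: "0 \<le> p \<and> p \<le> int m"
      have "nat (phi m p v) \<le> ((nat p + 1) choose 2) + ((m - nat p + 1) choose 2)"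
        using binom_bound[OF v] pp by (simp add: nat_le_iff)
      then show "ps n m p v \<le> enat (((nat p + 1) choose 2) + ((m - nat p + 1) choose 2))"
        unfolding ps_eq by simp
    qed
  qed
qed

end
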